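(* For all non-negative integers $n$ and positive integers $k,m$, $$\det\Big(D_{2n+2j-2i}^{(2k+2m-1)}\Big)_{0\le i,j\le k-1}=(-1)^{km}\det\Big(D_{-2n-2j+2i-2k-2m}^{(2k+2m-1)}\Big)_{0\le i,j\le m-1}.$$
   Context: For $N\ge0$ and $0\le r,s\le K$, $C_N^{(K)}(r\to s)$ is the number of lattice paths with steps $(1,1),(1,-1)$ from $(0,r)$ to $(N,s)$ never below the $x$-axis nor above $y=K$. For odd $K$, $F(x)=\sum_{N\ge0}C_N^{(K)}(r\to s)x^N$ is rational $p/q$ with $\deg p<\deg q$, $q(0)\ne0$, and for negative $N$, $C_N^{(K)}(r\to s)$ is defined by $\sum_{N\ge1}C_{-N}^{(K)}(r\to s)x^N=-F(1/x)$ (equivalently by running the linear recurrence backwards); thus $C_N^{(K)}(r\to s)$ is defined for all integers $N$, and equals the path count for $N\ge0$. For all integers $n$, $D_{2n}^{(K)}:=C_{2n+K}^{(K)}(0\to K)$. *)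

theory Defs
  imports "HOL-Computational_Algebra.Polynomial_FPS" "Jordan_Normal_Form.Determinant"
begin

text \<open>A path is encoded by its list of vertical steps ws (each +1 or -1);
  the height after i steps is r + sum of the first i steps.\<close>
definition path_count :: "int \<Rightarrow> nat \<Rightarrow> int \<Rightarrow> int \<Rightarrow> nat" where
  "path_count K N r s = card {ws :: int list. length ws = N \<and> set ws \<subseteq> {1, -1} \<and>
      (\<forall>i\<le>N. 0 \<le> r + sum_list (take i ws) \<and> r + sum_list (take i ws) \<le> K) \<and>
      r + sum_list ws = s}"

definition path_gf :: "int \<Rightarrow> int \<Rightarrow> int \<Rightarrow> real fps" where
  "path_gf K r s = Abs_fps (\<lambda>N. real (path_count K N r s))"

definition gf_rep :: "int \<Rightarrow> int \<Rightarrow> int \<Rightarrow> real poly \<times> real poly" where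
  "gf_rep K r s = (SOME (p, q). poly q 0 \<noteq> 0 \<and> degree p < degree q \<and>
      path_gf K r s * fps_of_poly q = fps_of_poly p)"

text \<open>The power series -F(1/x) = - (x^(deg q - deg p) * reflect p) / reflect q,
  i.e. -p(1/x)/q(1/x) with numerator and denominator multiplied by x^(deg q).\<close>
definition neg_gf :: "int \<Rightarrow> int \<Rightarrow> int \<Rightarrow> real fps" where
  "neg_gf K r s = (case gf_rep K r s of (p, q) \<Rightarrow>
      - fps_of_poly (monom 1 (degree q - degree p) * reflect_poly p) / fps_of_poly (reflect_poly q))"

definition C :: "int \<Rightarrow> int \<Rightarrow> int \<Rightarrow> int \<Rightarrow> real" where
  "C K N r s = (if 0 \<le> N then real (path_count K (nat N) r s)
                else fps_nth (neg_gf K r s) (nat (- N)))"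

text \<open>D_{2n}^{(K)} := C_{2n+K}^{(K)}(0 \<rightarrow> K); the argument n here is half the subscript.\<close>
definition D :: "int \<Rightarrow> int \<Rightarrow> real" where
  "D K n = C K (2 * n + K) 0 K"

end

theory Submission
  imports Defs
begin

lemma back_zero:
  fixes r :: "int \<Rightarrow> real" and g :: "nat \<Rightarrow> real"
  assumes d: "d > 0" and g0: "g 0 \<noteq> 0"
  and rec: "\<And>N. r (N + int d) = (\<Sum>j<d. g j * r (N + int j))"
  and z: "\<And>N. N \<ge> N0 \<Longrightarrow> r N = 0"
  shows "r N = 0"
proof -
  have "\<forall>N. N \<ge> N0 - int k \<longrightarrow> r N = 0" for k
  proof (induction k)
    case 0 then show ?case using z by simp
  next
    case (Suc k)
    show ?case
    proof (intro allI impI)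
      fix N assume N: "N0 - int (Suc k) \<le> N"
      show "r N = 0"
      proof (cases "N \<ge> N0 - int k")
        case True then show ?thesis using Suc by blast
      next
        case False
        then have NN: "N = N0 - int k - 1" using N by simp
        have "r (N + int d) = 0" using Suc d NN by simp
        moreover have "(\<Sum>j<d. g j * r (N + int j)) = (\<Sum>j<d. if j = 0 then g 0 * r N else 0)"
          by (rule sum.cong, simp, use Suc NN in auto)
        moreover have "(\<Sum>j<d. if j = 0 then g 0 * r N else 0) = g 0 * r N"
          using d by (simp add: sum.delta)
        ultimately have "g 0 * r N = 0" using rec[of N] by simp
        then show ?thesis using g0 by simp
      qed
    qed
  qed
  then have A: "\<forall>N'\<ge>N0 - int (nat (N0 - N)). r N' = 0" .
  have "N0 - int (nat (N0 - N)) \<le> N" by (cases "N0 \<le> N") auto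
  then show ?thesis using A by blast
qed

lemma sum_delta_range:
  fixes g :: "nat \<Rightarrow> real"
  shows "(\<Sum>j<d. if d - j = i then g j else 0) = (if 1 \<le> i \<and> i \<le> d then g (d - i) else 0)"
proof -
  have "(\<Sum>j<d. if d - j = i then g j else 0) = (\<Sum>j<d. if j = d - i \<and> 1 \<le> i \<and> i \<le> d then g j else 0)"
    by (rule sum.cong) auto
  also have "\<dots> = (if 1 \<le> i \<and> i \<le> d then g (d - i) else 0)"
    by (cases "1 \<le> i \<and> i \<le> d") (auto simp: sum.delta)
  finally show ?thesis .
qed

definition recq :: "nat \<Rightarrow> (nat \<Rightarrow> real) \<Rightarrow> real poly" where
  "recq d g = 1 - (\<Sum>j<d. monom (g j) (d - j))"

lemma coeff_recq: "coeff (recq d g) i = (if i = 0 then 1 else if i \<le> d then - g (d - i) else 0)"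
  unfolding recq_def by (auto simp: coeff_sum sum_delta_range)

lemma degree_recq: assumes "d > 0" "g 0 \<noteq> 0" shows "degree (recq d g) = d"
proof (rule antisym)
  show "degree (recq d g) \<le> d" by (rule degree_le) (auto simp: coeff_recq)
  show "d \<le> degree (recq d g)" by (rule le_degree) (use assms in \<open>auto simp: coeff_recq\<close>)
qed

lemma recq_times_nth:
  fixes c :: "int \<Rightarrow> real"
  assumes d: "d > 0"
  and rec: "\<And>N. c (N + int d) = (\<Sum>j<d. g j * c (N + int j))"
  and i: "i \<ge> d"
  shows "fps_nth (Abs_fps (\<lambda>n. c (int n)) * fps_of_poly (recq d g)) i = 0"
proof -
  have "fps_nth (Abs_fps (\<lambda>n. c (int n)) * fps_of_poly (recq d g)) i
      = fps_nth (fps_of_poly (recq d g) * Abs_fps (\<lambda>n. c (int n))) i" by (simp add: mult.commute)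
  also have "\<dots> = (\<Sum>t=0..i. coeff (recq d g) t * c (int (i - t)))" by (simp add: fps_mult_nth)
  also have "\<dots> = (\<Sum>t=0..i. (if t = 0 then c (int i) else 0) - (if t \<in> {1..d} then g (d - t) * c (int i - int t) else 0))"
    by (rule sum.cong) (use i in \<open>auto simp: coeff_recq of_nat_diff\<close>)
  also have "\<dots> = (\<Sum>t=0..i. (if t = 0 then c (int i) else 0)) - (\<Sum>t=0..i. (if t \<in> {1..d} then g (d - t) * c (int i - int t) else 0))"
    by (rule sum_subtractf)
  also have "(\<Sum>t=0..i. (if t = 0 then c (int i) else 0)) = c (int i)" by simp
  also have "(\<Sum>t=0..i. (if t \<in> {1..d} then g (d - t) * c (int i - int t) else 0))
     = (\<Sum>t\<in>{0..i} \<inter> {1..d}. g (d - t) * c (int i - int t))"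
    by (rule sum.inter_restrict[symmetric]) simp
  also have "{0..i} \<inter> {1..d} = {1..d}" using i by auto
  also have "(\<Sum>t\<in>{1..d}. g (d - t) * c (int i - int t)) = (\<Sum>j<d. g j * c (int i - int d + int j))"
    by (rule sum.reindex_bij_witness[of _ "\<lambda>j. d - j" "\<lambda>t. d - t"]) (auto simp: of_nat_diff)
  also have "\<dots> = c (int i)" using rec[of "int i - int d"] by simp
  finally show ?thesis by simp
qed

lemma gf_exists:
  fixes c :: "int \<Rightarrow> real"
  assumes d: "d > 0" and g0: "g 0 \<noteq> 0"
  and rec: "\<And>N. c (N + int d) = (\<Sum>j<d. g j * c (N + int j))"
  shows "\<exists>p q. poly q 0 \<noteq> 0 \<and> degree p < degree q \<and>
     Abs_fps (\<lambda>n. c (int n)) * fps_of_poly q = fps_of_poly p"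
proof -
  define q where "q = recq d g"
  define F where "F = Abs_fps (\<lambda>n. c (int n))"
  define p where "p = (\<Sum>i<d. monom (fps_nth (F * fps_of_poly q) i) i)"
  have cp: "coeff p i = (if i < d then fps_nth (F * fps_of_poly q) i else 0)" for i
    unfolding p_def by (auto simp: coeff_sum coeff_monom sum.delta)
  have "degree p \<le> d - 1" by (rule degree_le) (use d in \<open>auto simp: cp\<close>)
  then have dp: "degree p < degree q" unfolding q_def using degree_recq[of d g] d g0 by simp
  have q0: "poly q 0 \<noteq> 0" unfolding q_def by (simp add: poly_0_coeff_0 coeff_recq)
  have "F * fps_of_poly q = fps_of_poly p"
  proof (rule fps_ext)
    fix i show "fps_nth (F * fps_of_poly q) i = fps_nth (fps_of_poly p) i"
      using recq_times_nth[OF d rec, of i] unfolding F_def q_def by (auto simp: cp q_def F_def)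
  qed
  then show ?thesis using dp q0 unfolding F_def by blast
qed

lemma neg_coeff:
  fixes c :: "int \<Rightarrow> real" and p q :: "real poly"
  assumes d: "d > 0" and g0: "g 0 \<noteq> 0"
  and rec: "\<And>N. c (N + int d) = (\<Sum>j<d. g j * c (N + int j))"
  and q0: "poly q 0 \<noteq> 0" and dpq: "degree p < degree q"
  and Fpq: "Abs_fps (\<lambda>n. c (int n)) * fps_of_poly q = fps_of_poly p"
  and M: "M \<ge> 1"
  shows "fps_nth (- fps_of_poly (monom 1 (degree q - degree p) * reflect_poly p) / fps_of_poly (reflect_poly q)) M = c (- int M)"
proof -
  define F where "F = Abs_fps (\<lambda>n. c (int n))"
  define dq where "dq = degree q"
  define dp where "dp = degree p"
  have qnz: "q \<noteq> 0" using q0 by auto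
  define r where "r N = (\<Sum>t\<le>dq. coeff q t * c (N - int t))" for N
  have rrec: "r (N + int d) = (\<Sum>j<d. g j * r (N + int j))" for N
  proof -
    have e: "c (N + int d - int t) = (\<Sum>j<d. g j * c (N + int j - int t))" for t
      using rec[of "N - int t"] by (simp add: algebra_simps)
    have "r (N + int d) = (\<Sum>t\<le>dq. \<Sum>j<d. coeff q t * (g j * c (N + int j - int t)))"
      unfolding r_def e by (simp add: sum_distrib_left)
    also have "\<dots> = (\<Sum>j<d. \<Sum>t\<le>dq. g j * (coeff q t * c (N + int j - int t)))"
      by (subst sum.swap) (simp add: algebra_simps)
    also have "\<dots> = (\<Sum>j<d. g j * r (N + int j))"
      unfolding r_def by (simp add: sum_distrib_left)
    finally show ?thesis .
  qed
  have rz: "r N = 0" if N: "N \<ge> int dq" for N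
  proof -
    obtain n where n: "N = int n" "n \<ge> dq" using N by (metis nonneg_int_cases of_nat_0_le_iff order_trans of_nat_le_iff)
    have "fps_nth (F * fps_of_poly q) n = coeff p n" using Fpq unfolding F_def by simp
    also have "\<dots> = 0" using n dpq unfolding dq_def by (simp add: coeff_eq_0)
    finally have z: "fps_nth (fps_of_poly q * F) n = 0" by (simp add: mult.commute)
    have "fps_nth (fps_of_poly q * F) n = (\<Sum>t=0..n. coeff q t * c (int (n - t)))"
      unfolding F_def by (simp add: fps_mult_nth)
    also have "\<dots> = (\<Sum>t\<le>dq. coeff q t * c (int (n - t)))"
      by (rule sum.mono_neutral_right) (use n in \<open>auto simp: dq_def coeff_eq_0\<close>)
    also have "\<dots> = r N" unfolding r_def n by (rule sum.cong) (use n in \<open>auto simp: of_nat_diff\<close>)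
    finally show ?thesis using z by simp
  qed
  have qrec: "r N = 0" for N by (rule back_zero[OF d g0 rrec rz])
  define Gs where "Gs = Abs_fps (\<lambda>M. if M = 0 then 0 else c (- int M))"
  define R where "R = fps_of_poly (reflect_poly q)"
  define P where "P = fps_of_poly (monom 1 (dq - dp) * reflect_poly p)"
  have R0: "R \<noteq> 0"
  proof
    assume "R = 0"
    then have "fps_nth R 0 = 0" by simp
    then show False unfolding R_def using qnz by (simp add: coeff_0_reflect_poly)
  qed
  have key: "Gs * R = - P"
  proof (rule fps_ext)
    fix M
    define f where "f t = coeff q (dq - t) * c (int t - int M)" for t
    have "fps_nth (Gs * R) M = fps_nth (R * Gs) M" by (simp add: mult.commute)
    also have "\<dots> = (\<Sum>t=0..M. if t \<in> {..dq} \<inter> {..<M} then f t else 0)"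
      unfolding R_def Gs_def f_def fps_mult_nth
      by (rule sum.cong) (auto simp: coeff_reflect_poly dq_def of_nat_diff)
    also have "\<dots> = sum f ({0..M} \<inter> ({..dq} \<inter> {..<M}))"
      by (rule sum.inter_restrict[symmetric]) simp
    also have "{0..M} \<inter> ({..dq} \<inter> {..<M}) = {..dq} \<inter> {..<M}" by auto
    finally have L1: "fps_nth (Gs * R) M = sum f ({..dq} \<inter> {..<M})" .
    have "0 = r (int dq - int M)" using qrec by simp
    also have "\<dots> = (\<Sum>s\<le>dq. coeff q s * c (int dq - int M - int s))" unfolding r_def ..
    also have "\<dots> = sum f {..dq}"
      unfolding f_def
      by (rule sum.reindex_bij_witness[of _ "\<lambda>t. dq - t" "\<lambda>s. dq - s"]) (auto simp: of_nat_diff algebra_simps)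
    also have "\<dots> = sum f ({..dq} \<inter> {..<M}) + sum f ({..dq} - {..<M})"
      by (rule sum.Int_Diff) simp
    finally have L2: "sum f ({..dq} \<inter> {..<M}) = - sum f ({..dq} - {..<M})" by simp
    have L3: "sum f ({..dq} - {..<M}) = (if M \<le> dq then coeff p (dq - M) else 0)"
    proof (cases "M \<le> dq")
      case True
      have "coeff p (dq - M) = fps_nth (F * fps_of_poly q) (dq - M)" using Fpq unfolding F_def by simp
      also have "\<dots> = (\<Sum>l=0..dq - M. c (int l) * coeff q (dq - M - l))"
        unfolding F_def by (simp add: fps_mult_nth)
      also have "\<dots> = sum f ({..dq} - {..<M})"
        unfolding f_def
        by (rule sum.reindex_bij_witness[of _ "\<lambda>t. t - M" "\<lambda>l. l + M"]) (use True in \<open>auto simp: of_nat_diff add.commute\<close>)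
      finally show ?thesis using True by simp
    next
      case False
      then have e: "{..dq} - {..<M} = {}" by auto
      show ?thesis using False by (simp only: e sum.empty) simp
    qed
    have RHS: "fps_nth (- P) M = - (if M < dq - dp then 0 else if M - (dq - dp) > dp then 0 else coeff p (dp - (M - (dq - dp))))"
      unfolding P_def by (simp add: coeff_monom_mult coeff_reflect_poly dp_def)
    have dpq': "dp < dq" using dpq unfolding dp_def dq_def .
    show "fps_nth (Gs * R) M = fps_nth (- P) M"
      unfolding L1 L2 L3 RHS
    proof -
      consider "M < dq - dp" | "dq - dp \<le> M" "M \<le> dq" | "dq < M" by linarith
      then show "- (if M \<le> dq then coeff p (dq - M) else 0) = - (if M < dq - dp then 0 else if M - (dq - dp) > dp then 0 else coeff p (dp - (M - (dq - dp))))"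
      proof cases
        case 1 then have "coeff p (dq - M) = 0" using dpq' by (intro coeff_eq_0) (simp add: dp_def)
        then show ?thesis using 1 by simp
      next
        case 2 then have "dp - (M - (dq - dp)) = dq - M" using dpq' by simp
        then show ?thesis using 2 dpq' by simp
      qed (use dpq' in auto)
    qed
  qed
  have "- P / R = Gs" using key R0 by (metis fps_divide_times_eq)
  then have "fps_nth (- P / R) M = c (- int M)" using M unfolding Gs_def by simp
  then show ?thesis unfolding P_def R_def dq_def dp_def .
qed

lemma C_eq_ext:
  fixes ch :: "int \<Rightarrow> real"
  assumes d: "d > 0" and g0: "g 0 \<noteq> 0"
  and rec: "\<And>N. ch (N + int d) = (\<Sum>j<d. g j * ch (N + int j))"
  and base: "\<And>n. ch (int n) = real (path_count K n r s)"
  shows "C K N r s = ch N"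
proof (cases "0 \<le> N")
  case True
  then show ?thesis unfolding C_def using base[of "nat N"] by simp
next
  case False
  have pg: "path_gf K r s = Abs_fps (\<lambda>n. ch (int n))"
    unfolding path_gf_def using base by simp
  define P where "P = (\<lambda>(p, q). poly q 0 \<noteq> 0 \<and> degree p < degree q \<and>
      path_gf K r s * fps_of_poly q = fps_of_poly (p :: real poly))"
  have ex: "\<exists>x. P x" using gf_exists[OF d g0 rec] unfolding P_def pg by auto
  have gr: "gf_rep K r s = (SOME x. P x)" unfolding gf_rep_def P_def ..
  obtain p q where pq: "gf_rep K r s = (p, q)" by fastforce
  have "P (p, q)" using someI_ex[OF ex] unfolding gr[symmetric] pq .
  then have q0: "poly q 0 \<noteq> 0" and dpq: "degree p < degree q"
    and F: "Abs_fps (\<lambda>n. ch (int n)) * fps_of_poly q = fps_of_poly p"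
    unfolding P_def pg by auto
  have M: "nat (- N) \<ge> 1" using False by simp
  have "C K N r s = fps_nth (neg_gf K r s) (nat (- N))" unfolding C_def using False by simp
  also have "\<dots> = ch (- int (nat (- N)))"
    unfolding neg_gf_def pq by (simp only: prod.case) (rule neg_coeff[OF d g0 rec q0 dpq F M])
  also have "- int (nat (- N)) = N" using False by simp
  finally show ?thesis .
qed

definition PS :: "int \<Rightarrow> nat \<Rightarrow> int \<Rightarrow> int \<Rightarrow> int list set" where
  "PS K N r s = {ws :: int list. length ws = N \<and> set ws \<subseteq> {1, -1} \<and>
      (\<forall>i\<le>N. 0 \<le> r + sum_list (take i ws) \<and> r + sum_list (take i ws) \<le> K) \<and>
      r + sum_list ws = s}"

lemma pc_PS: "path_count K N r s = card (PS K N r s)"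
  unfolding path_count_def PS_def ..

lemma PS_finite: "finite (PS K N r s)"
proof (rule finite_subset)
  show "PS K N r s \<subseteq> {ws. set ws \<subseteq> {1, -1} \<and> length ws = N}" unfolding PS_def by auto
  show "finite {ws. set ws \<subseteq> {1, -1::int} \<and> length ws = N}"
    by (rule finite_lists_length_eq) simp
qed

lemma pc_0: "path_count K 0 r s = (if s = r \<and> 0 \<le> r \<and> r \<le> K then 1 else 0)"
proof -
  have "PS K 0 r s = (if s = r \<and> 0 \<le> r \<and> r \<le> K then {[]} else {})"
    unfolding PS_def by auto
  then show ?thesis unfolding pc_PS by simp
qed

lemma PS_out: assumes "\<not> (0 \<le> s \<and> s \<le> K)" shows "PS K N r s = {}"
proof -
  { fix ws assume "ws \<in> PS K N r s"
    then have "length ws = N" "\<forall>i\<le>N. 0 \<le> r + sum_list (take i ws) \<and> r + sum_list (take i ws) \<le> K"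
      "r + sum_list ws = s" unfolding PS_def by auto
    then have False using assms by (metis order_refl take_all) }
  then show ?thesis by blast
qed

lemma take_snoc_le: "i \<le> length xs \<Longrightarrow> take i (xs @ [x]) = take i xs" by simp

lemma PS_Suc: assumes s: "0 \<le> s" "s \<le> K"
  shows "PS K (Suc N) r s = (\<lambda>ws. ws @ [1]) ` PS K N r (s-1) \<union> (\<lambda>ws. ws @ [-1]) ` PS K N r (s+1)"
proof (intro equalityI subsetI)
  fix ws assume w: "ws \<in> PS K (Suc N) r s"
  then have len: "length ws = Suc N" unfolding PS_def by auto
  then obtain ws' x where ws: "ws = ws' @ [x]" by (metis length_Suc_conv_rev append_Cons append_Nil rev.simps(2) rev_rev_ident)
  have len': "length ws' = N" using len ws by simp
  have x: "x \<in> {1, -1}" using w ws unfolding PS_def by auto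
  have set': "set ws' \<subseteq> {1, -1}" using w ws unfolding PS_def by auto
  have cond': "\<forall>i\<le>N. 0 \<le> r + sum_list (take i ws') \<and> r + sum_list (take i ws') \<le> K"
  proof (intro allI impI)
    fix i assume i: "i \<le> N"
    then have "take i ws = take i ws'" using ws len' by simp
    then show "0 \<le> r + sum_list (take i ws') \<and> r + sum_list (take i ws') \<le> K"
      using w i unfolding PS_def by (metis (mono_tags, lifting) le_Suc_eq mem_Collect_eq)
  qed
  have endp: "r + sum_list ws' = s - x" using w ws unfolding PS_def by auto
  show "ws \<in> (\<lambda>ws. ws @ [1]) ` PS K N r (s-1) \<union> (\<lambda>ws. ws @ [-1]) ` PS K N r (s+1)"
  proof (cases "x = 1")
    case True
    then have "ws' \<in> PS K N r (s-1)" unfolding PS_def using len' set' cond' endp by auto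
    then show ?thesis using ws True by auto
  next
    case False
    then have "x = -1" using x by auto
    then have "ws' \<in> PS K N r (s+1)" unfolding PS_def using len' set' cond' endp by auto
    then show ?thesis using ws \<open>x = -1\<close> by auto
  qed
next
  fix ws assume "ws \<in> (\<lambda>ws. ws @ [1]) ` PS K N r (s-1) \<union> (\<lambda>ws. ws @ [-1]) ` PS K N r (s+1)"
  then obtain ws' x where ws: "ws = ws' @ [x]" and x: "x \<in> {1, -1}" and w': "ws' \<in> PS K N r (s - x)"
    by auto
  have len': "length ws' = N" and set': "set ws' \<subseteq> {1, -1}"
    and cond': "\<forall>i\<le>N. 0 \<le> r + sum_list (take i ws') \<and> r + sum_list (take i ws') \<le> K"
    and endp: "r + sum_list ws' = s - x" using w' unfolding PS_def by auto
  have cond: "\<forall>i\<le>Suc N. 0 \<le> r + sum_list (take i ws) \<and> r + sum_list (take i ws) \<le> K"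
  proof (intro allI impI)
    fix i assume i: "i \<le> Suc N"
    show "0 \<le> r + sum_list (take i ws) \<and> r + sum_list (take i ws) \<le> K"
    proof (cases "i \<le> N")
      case True then show ?thesis using cond' ws len' by simp
    next
      case False then have "i = Suc N" using i by simp
      then have "take i ws = ws" using ws len' by simp
      then show ?thesis using endp ws s by simp
    qed
  qed
  show "ws \<in> PS K (Suc N) r s" unfolding PS_def using ws len' set' x cond endp by auto
qed

lemma pc_Suc: "path_count K (Suc N) r s =
   (if 0 \<le> s \<and> s \<le> K then path_count K N r (s-1) + path_count K N r (s+1) else 0)"
proof (cases "0 \<le> s \<and> s \<le> K")
  case True
  have "card ((\<lambda>ws. ws @ [1]) ` PS K N r (s-1) \<union> (\<lambda>ws. ws @ [-1::int]) ` PS K N r (s+1))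
      = card ((\<lambda>ws. ws @ [1]) ` PS K N r (s-1)) + card ((\<lambda>ws. ws @ [-1::int]) ` PS K N r (s+1))"
    by (rule card_Un_disjoint) (auto simp: PS_finite)
  also have "\<dots> = card (PS K N r (s-1)) + card (PS K N r (s+1))"
    by (subst card_image, simp add: inj_on_def)+ simp
  finally show ?thesis using True unfolding pc_PS PS_Suc[OF conjunct1[OF True] conjunct2[OF True]] by simp
next
  case False then show ?thesis unfolding pc_PS using PS_out[OF False, of "Suc N" r] False by auto
qed

lemma pc_out: "\<not> (0 \<le> s \<and> s \<le> K) \<Longrightarrow> path_count K N r s = 0"
  unfolding pc_PS using PS_out by simp

lemma pc_parity: "odd (int N + s) \<Longrightarrow> path_count K N 0 s = 0"
proof (induction N arbitrary: s)
  case 0 then show ?case by (auto simp: pc_0)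
next
  case (Suc N)
  have "odd (int N + (s - 1))" "odd (int N + (s + 1))" using Suc.prems by auto
  then show ?case using Suc.IH by (simp add: pc_Suc)
qed

lemma mult_entry: assumes "A \<in> carrier_mat n k" "B \<in> carrier_mat k l" "i < n" "j < l"
  shows "(A * B) $$ (i,j) = (\<Sum>r<k. A $$ (i,r) * B $$ (r,j))"
  using assms by (simp add: scalar_prod_def atLeast0LessThan)

definition Mm :: "nat \<Rightarrow> real mat" where
  "Mm L = mat L L (\<lambda>(i,j). if j = i \<or> j + 1 = i then 1 else 0)"

definition Gm :: "nat \<Rightarrow> real mat" where
  "Gm L = Mm L * transpose_mat (Mm L)"

definition gent :: "nat \<Rightarrow> nat \<Rightarrow> real" where
  "gent i j = (if i = j then (if i = 0 then 1 else 2) else if i = j + 1 \<or> j = i + 1 then 1 else 0)"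

lemma Mm_carrier[simp]: "Mm L \<in> carrier_mat L L" unfolding Mm_def by simp
lemma Mm_entry: "i < L \<Longrightarrow> j < L \<Longrightarrow> Mm L $$ (i,j) = (if j = i \<or> j + 1 = i then 1 else 0)"
  unfolding Mm_def by simp
lemma MmT: "i < L \<Longrightarrow> j < L \<Longrightarrow> transpose_mat (Mm L) $$ (i,j) = Mm L $$ (j,i)"
  by (rule index_transpose_mat(1)) (auto simp: Mm_def)
lemma Gm_carrier[simp]: "Gm L \<in> carrier_mat L L" unfolding Gm_def
  by (rule mult_carrier_mat[of _ L L]) auto
lemma Gm_dim[simp]: "dim_row (Gm L) = L" "dim_col (Gm L) = L" unfolding Gm_def Mm_def by simp_all

lemma sum_delta0: "(\<Sum>r<(L::nat). if r = a then f r else (0::real)) = (if a < L then f a else 0)"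
  by (induction L) auto

lemma Mm_mult_left: assumes Y: "Y \<in> carrier_mat L L" and i: "i < L" and j: "j < L"
  shows "(Mm L * Y) $$ (i,j) = Y $$ (i,j) + (if i \<ge> 1 then Y $$ (i-1,j) else 0)"
proof -
  have e: "(Mm L * Y) $$ (i,j) = (\<Sum>r<L. Mm L $$ (i,r) * Y $$ (r,j))"
    by (rule mult_entry) (use Y i j in simp_all)
  show ?thesis
  proof (cases i)
    case 0
    have "(\<Sum>r<L. Mm L $$ (i,r) * Y $$ (r,j)) = (\<Sum>r<L. if r = 0 then Y $$ (r,j) else 0)"
      by (rule sum.cong) (use 0 i in \<open>simp_all add: Mm_entry\<close>)
    also have "\<dots> = Y $$ (0,j)" using i by (simp only: sum_delta0) simp
    finally show ?thesis using e 0 by simp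
  next
    case (Suc i')
    have "(\<Sum>r<L. Mm L $$ (i,r) * Y $$ (r,j)) = (\<Sum>r<L. (if r = Suc i' then Y $$ (r,j) else 0) + (if r = i' then Y $$ (r,j) else 0))"
      by (rule sum.cong) (use Suc i in \<open>auto simp add: Mm_entry\<close>)
    also have "\<dots> = Y $$ (Suc i',j) + Y $$ (i',j)" using i Suc by (simp only: sum.distrib sum_delta0) simp
    finally show ?thesis using e Suc by simp
  qed
qed

lemma Gm_entry: assumes i: "i < L" and j: "j < L" shows "Gm L $$ (i,j) = gent i j"
proof -
  have "Gm L $$ (i,j) = transpose_mat (Mm L) $$ (i,j) + (if i \<ge> 1 then transpose_mat (Mm L) $$ (i-1,j) else 0)"
    unfolding Gm_def by (rule Mm_mult_left) (use i j in simp_all)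
  also have "\<dots> = Mm L $$ (j,i) + (if i \<ge> 1 then Mm L $$ (j,i-1) else 0)"
    using i j by (simp add: MmT)
  also have "\<dots> = gent i j"
  proof (cases i)
    case 0 then show ?thesis using i j by (simp add: Mm_entry gent_def)
  next
    case (Suc i') then show ?thesis using i j by (auto simp add: Mm_entry gent_def)
  qed
  finally show ?thesis .
qed

lemma gent_sym: "gent i j = gent j i" unfolding gent_def by auto

lemma gent_sum: assumes "i < L"
  shows "(\<Sum>r<L. gent i r * f r) = (if i + 1 < L then f (i + 1) else 0) + (if i = 0 then 1 else 2) * f i + (if i \<ge> 1 then f (i - 1) else 0)"
proof (cases i)
  case 0
  have pt: "gent i r * f r = (if r = 1 then f r else 0) + (if r = 0 then f r else 0)" for r
    using 0 by (cases "r = 0"; cases "r = 1") (simp_all add: gent_def)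
  have "(\<Sum>r<L. gent i r * f r) = (\<Sum>r<L. if r = 1 then f r else 0) + (\<Sum>r<L. if r = 0 then f r else 0)"
    unfolding pt sum.distrib ..
  also have "\<dots> = (if 1 < L then f 1 else 0) + (if 0 < L then f 0 else 0)"
    by (simp only: sum_delta0)
  finally show ?thesis using 0 assms by simp
next
  case (Suc i')
  have pt: "gent i r * f r = (if r = Suc (Suc i') then f r else 0) + (if r = Suc i' then 2 * f r else 0) + (if r = i' then f r else 0)" for r
    using Suc by (cases "r = i'"; cases "r = Suc i'"; cases "r = Suc (Suc i')") (simp_all add: gent_def)
  have "(\<Sum>r<L. gent i r * f r) = (\<Sum>r<L. if r = Suc (Suc i') then f r else 0) + (\<Sum>r<L. if r = Suc i' then 2 * f r else 0) + (\<Sum>r<L. if r = i' then f r else 0)"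
    unfolding pt sum.distrib ..
  also have "\<dots> = (if Suc (Suc i') < L then f (Suc (Suc i')) else 0) + (if Suc i' < L then 2 * f (Suc i') else 0) + (if i' < L then f i' else 0)"
    by (simp only: sum_delta0)
  finally show ?thesis using Suc assms by simp
qed

lemma G_mult_left: assumes X: "X \<in> carrier_mat L L" and i: "i < L" and j: "j < L"
  shows "(Gm L * X) $$ (i,j) = (if i + 1 < L then X $$ (i+1,j) else 0) + (if i = 0 then 1 else 2) * X $$ (i,j) + (if i \<ge> 1 then X $$ (i-1,j) else 0)"
proof -
  have "(Gm L * X) $$ (i,j) = (\<Sum>r<L. gent i r * X $$ (r,j))"
    using X i j by (subst mult_entry[of _ L L _ L]) (auto simp: Gm_entry)
  then show ?thesis using gent_sum[OF i, of "\<lambda>r. X $$ (r,j)"] by simp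
qed

lemma G_mult_right: assumes X: "X \<in> carrier_mat L L" and i: "i < L" and j: "j < L"
  shows "(X * Gm L) $$ (i,j) = (if j + 1 < L then X $$ (i,j+1) else 0) + (if j = 0 then 1 else 2) * X $$ (i,j) + (if j \<ge> 1 then X $$ (i,j-1) else 0)"
proof -
  have "(X * Gm L) $$ (i,j) = (\<Sum>r<L. gent j r * X $$ (i,r))"
    using X i j by (subst mult_entry[of _ L L _ L]) (auto simp: Gm_entry gent_sym mult.commute)
  then show ?thesis using gent_sum[OF j, of "\<lambda>r. X $$ (i,r)"] by simp
qed

lemma pow_mat_Suc_left: assumes "A \<in> carrier_mat n n" shows "A ^\<^sub>m Suc k = A * A ^\<^sub>m k"
proof (induction k)
  case 0 then show ?case using assms by simp
next
  case (Suc k)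
  have "A ^\<^sub>m Suc (Suc k) = (A * A ^\<^sub>m k) * A" using Suc by simp
  also have "\<dots> = A * (A ^\<^sub>m k * A)" using assms by (simp add: assoc_mult_mat[of _ n n _ n _ n])
  finally show ?case by simp
qed

lemma pow_mat_add: assumes "A \<in> carrier_mat n n" shows "A ^\<^sub>m (a + b) = A ^\<^sub>m a * A ^\<^sub>m b"
proof (induction b)
  case 0 then show ?case using assms by simp
next
  case (Suc b)
  have "A ^\<^sub>m (a + Suc b) = (A ^\<^sub>m a * A ^\<^sub>m b) * A" using Suc by simp
  also have "\<dots> = A ^\<^sub>m a * (A ^\<^sub>m b * A)" using assms by (simp add: assoc_mult_mat[of _ n n _ n _ n])
  finally show ?case by simp
qed

lemma kry_row: assumes "p < L"
  shows "(j < p \<longrightarrow> (Gm L ^\<^sub>m j) $$ (0, p) = 0) \<and> (p = j \<longrightarrow> (Gm L ^\<^sub>m j) $$ (0, p) = 1)"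
  using assms
proof (induction j arbitrary: p)
  case 0 then show ?case by auto
next
  case (Suc j)
  have e: "(Gm L ^\<^sub>m Suc j) $$ (0,p) = (if p + 1 < L then (Gm L ^\<^sub>m j) $$ (0,p+1) else 0) + (if p = 0 then 1 else 2) * (Gm L ^\<^sub>m j) $$ (0,p) + (if p \<ge> 1 then (Gm L ^\<^sub>m j) $$ (0,p-1) else 0)"
    unfolding pow_mat.simps(2) by (rule G_mult_right) (use Suc.prems in auto)
  show ?case
  proof (intro conjI impI)
    assume jp: "Suc j < p"
    have a: "(Gm L ^\<^sub>m j) $$ (0,p) = 0" using Suc.IH[of p] Suc.prems jp by simp
    have b: "(Gm L ^\<^sub>m j) $$ (0,p-1) = 0" using Suc.IH[of "p-1"] Suc.prems jp by simp
    have c: "p + 1 < L \<Longrightarrow> (Gm L ^\<^sub>m j) $$ (0,p+1) = 0" using Suc.IH[of "p+1"] jp by simp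
    show "(Gm L ^\<^sub>m Suc j) $$ (0, p) = 0" unfolding e using a b c by simp
  next
    assume p: "p = Suc j"
    have "(Gm L ^\<^sub>m j) $$ (0,p-1) = 1" using Suc.IH[of "p-1"] Suc.prems p by auto
    moreover have "(Gm L ^\<^sub>m j) $$ (0,p) = 0" using Suc.IH[of p] Suc.prems p by auto
    moreover have "p + 1 < L \<Longrightarrow> (Gm L ^\<^sub>m j) $$ (0,p+1) = 0" using Suc.IH[of "p+1"] p by auto
    ultimately show "(Gm L ^\<^sub>m Suc j) $$ (0, p) = 1" unfolding e using p by simp
  qed
qed

lemma kry_col: assumes "p < L"
  shows "(p + j < L - 1 \<longrightarrow> (Gm L ^\<^sub>m j) $$ (p, L - 1) = 0) \<and> (p + j = L - 1 \<longrightarrow> (Gm L ^\<^sub>m j) $$ (p, L - 1) = 1)"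
  using assms
proof (induction j arbitrary: p)
  case 0 then show ?case by auto
next
  case (Suc j)
  have L: "L - 1 < L" using Suc.prems by simp
  have e: "(Gm L ^\<^sub>m Suc j) $$ (p, L-1) = (if p + 1 < L then (Gm L ^\<^sub>m j) $$ (p+1,L-1) else 0) + (if p = 0 then 1 else 2) * (Gm L ^\<^sub>m j) $$ (p,L-1) + (if p \<ge> 1 then (Gm L ^\<^sub>m j) $$ (p-1,L-1) else 0)"
    unfolding pow_mat_Suc_left[OF Gm_carrier] by (rule G_mult_left) (use Suc.prems in auto)
  show ?case
  proof (intro conjI impI)
    assume jp: "p + Suc j < L - 1"
    have a: "(Gm L ^\<^sub>m j) $$ (p,L-1) = 0" using Suc.IH[of p] Suc.prems jp by simp
    have b: "p \<ge> 1 \<Longrightarrow> (Gm L ^\<^sub>m j) $$ (p-1,L-1) = 0" using Suc.IH[of "p-1"] Suc.prems jp by simp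
    have c: "p + 1 < L \<Longrightarrow> (Gm L ^\<^sub>m j) $$ (p+1,L-1) = 0" using Suc.IH[of "p+1"] jp by simp
    show "(Gm L ^\<^sub>m Suc j) $$ (p, L - 1) = 0" unfolding e using a b c by simp
  next
    assume p: "p + Suc j = L - 1"
    have "(Gm L ^\<^sub>m j) $$ (p+1,L-1) = 1" using Suc.IH[of "p+1"] Suc.prems p by auto
    moreover have "(Gm L ^\<^sub>m j) $$ (p,L-1) = 0" using Suc.IH[of p] Suc.prems p by auto
    moreover have "p \<ge> 1 \<Longrightarrow> (Gm L ^\<^sub>m j) $$ (p-1,L-1) = 0" using Suc.IH[of "p-1"] p Suc.prems by auto
    ultimately show "(Gm L ^\<^sub>m Suc j) $$ (p, L - 1) = 1" unfolding e using p Suc.prems by simp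
  qed
qed

lemma det_Mm: "det (Mm L) = 1"
proof -
  have "det (Mm L) = prod_list (diag_mat (Mm L))"
    by (rule det_lower_triangular[of L]) (auto simp: Mm_entry)
  also have "\<dots> = (\<Prod>i = 0..<L. Mm L $$ (i,i))" by (simp add: prod_list_diag_prod Mm_def)
  also have "\<dots> = 1" by (rule prod.neutral) (auto simp: Mm_entry)
  finally show ?thesis .
qed

lemma det_Gm: "det (Gm L) = 1"
  unfolding Gm_def by (subst det_mult[of _ L]) (auto simp: det_transpose[OF Mm_carrier] det_Mm)

lemma Gm_inv_ex: "\<exists>W. W \<in> carrier_mat L L \<and> Gm L * W = 1\<^sub>m L \<and> W * Gm L = 1\<^sub>m L"
proof -
  have "Gm L \<in> Units (ring_mat TYPE(real) L undefined)"
    by (rule det_non_zero_imp_unit) (auto simp: det_Gm)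
  then show ?thesis unfolding Units_def ring_mat_def by auto
qed

definition Wm :: "nat \<Rightarrow> real mat" where
  "Wm L = (SOME W. W \<in> carrier_mat L L \<and> Gm L * W = 1\<^sub>m L \<and> W * Gm L = 1\<^sub>m L)"

lemma Wm: "Wm L \<in> carrier_mat L L" "Gm L * Wm L = 1\<^sub>m L" "Wm L * Gm L = 1\<^sub>m L"
  using someI_ex[OF Gm_inv_ex[of L]] unfolding Wm_def[symmetric] by auto

lemma Wm_carrier[simp]: "Wm L \<in> carrier_mat L L" using Wm by simp
lemma Wm_dim[simp]: "dim_row (Wm L) = L" "dim_col (Wm L) = L" using Wm_carrier[of L] unfolding carrier_mat_def by auto

definition Gp :: "nat \<Rightarrow> int \<Rightarrow> real mat" where
  "Gp L s = (if 0 \<le> s then Gm L ^\<^sub>m nat s else Wm L ^\<^sub>m nat (- s))"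

lemma Gp_carrier[simp]: "Gp L s \<in> carrier_mat L L" unfolding Gp_def by simp

lemma Gp_dim[simp]: "dim_row (Gp L s) = L" "dim_col (Gp L s) = L" using Gp_carrier[of L s] unfolding carrier_mat_def by auto

lemma Gp_nat[simp]: "Gp L (int n) = Gm L ^\<^sub>m n" unfolding Gp_def by simp

lemma Gp_0[simp]: "Gp L 0 = 1\<^sub>m L" using Gp_nat[of L 0] by simp

lemma Gp_neg: "Gp L (- int n) = Wm L ^\<^sub>m n" unfolding Gp_def by (cases "n = 0") auto

lemma Gp_m1: "Gp L (- 1) = Wm L" using Gp_neg[of L 1] by simp

lemma Gp_succ_right: "Gp L (s + 1) = Gp L s * Gm L"
proof (cases "0 \<le> s")
  case True
  then have "nat (s + 1) = Suc (nat s)" by simp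
  then show ?thesis using True unfolding Gp_def by simp
next
  case False
  define n where "n = nat (- s - 1)"
  have s: "s = - int (Suc n)" using False n_def by simp
  show ?thesis
  proof (cases n)
    case 0
    then have "s = -1" using s by simp
    then show ?thesis using Wm by (simp add: Gp_m1)
  next
    case (Suc n')
    have "Gp L s * Gm L = (Wm L ^\<^sub>m n * Wm L) * Gm L" unfolding s Gp_neg by simp
    also have "\<dots> = Wm L ^\<^sub>m n * (Wm L * Gm L)" by (rule assoc_mult_mat[of _ L L _ L _ L]) auto
    also have "\<dots> = Wm L ^\<^sub>m n" using Wm by simp
    also have "\<dots> = Gp L (s + 1)" unfolding s using Gp_neg[of L n] by simp
    finally show ?thesis by simp
  qed
qed

lemma Gp_succ_left: "Gp L (s + 1) = Gm L * Gp L s"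
proof (cases "0 \<le> s")
  case True
  then have "nat (s + 1) = Suc (nat s)" by simp
  then show ?thesis using True unfolding Gp_def by (simp del: pow_mat.simps) (metis pow_mat.simps(2) pow_mat_Suc_left Gm_carrier)
next
  case False
  define n where "n = nat (- s - 1)"
  have s: "s = - int (Suc n)" using False n_def by simp
  have "Gm L * Gp L s = Gm L * (Wm L * Wm L ^\<^sub>m n)" unfolding s Gp_neg
    by (simp only: pow_mat_Suc_left[OF Wm_carrier])
  also have "\<dots> = (Gm L * Wm L) * Wm L ^\<^sub>m n" by (rule assoc_mult_mat[symmetric, of _ L L _ L _ L]) auto
  also have "\<dots> = Wm L ^\<^sub>m n" using Wm by simp
  also have "\<dots> = Gp L (s + 1)" unfolding s using Gp_neg[of L n] by simp
  finally show ?thesis by simp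
qed

lemma Gp_add_right: "Gp L (s + int j) = Gp L s * Gm L ^\<^sub>m j"
proof (induction j)
  case 0 then show ?case by simp
next
  case (Suc j)
  have "Gp L (s + int (Suc j)) = Gp L (s + int j) * Gm L" using Gp_succ_right[of L "s + int j"] by (simp add: algebra_simps)
  also have "\<dots> = (Gp L s * Gm L ^\<^sub>m j) * Gm L" using Suc by simp
  also have "\<dots> = Gp L s * (Gm L ^\<^sub>m j * Gm L)" by (rule assoc_mult_mat[of _ L L _ L _ L]) auto
  finally show ?case by simp
qed

lemma Gp_add_left: "Gp L (s + int j) = Gm L ^\<^sub>m j * Gp L s"
proof (induction j)
  case 0 then show ?case by simp
next
  case (Suc j)
  have "Gp L (s + int (Suc j)) = Gm L * Gp L (s + int j)" using Gp_succ_left[of L "s + int j"] by (simp add: algebra_simps)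
  also have "\<dots> = Gm L * (Gm L ^\<^sub>m j * Gp L s)" using Suc by simp
  also have "\<dots> = (Gm L * Gm L ^\<^sub>m j) * Gp L s" by (rule assoc_mult_mat[symmetric, of _ L L _ L _ L]) auto
  finally show ?case unfolding pow_mat_Suc_left[OF Gm_carrier] .
qed

lemma GW_one: "Gm L ^\<^sub>m N * Wm L ^\<^sub>m N = 1\<^sub>m L"
proof -
  have "Gp L (- int N + int N) = Gm L ^\<^sub>m N * Gp L (- int N)" by (rule Gp_add_left)
  then show ?thesis by (simp add: Gp_neg)
qed

lemma det_Gpow: "det (Gm L ^\<^sub>m N) = 1"
proof (induction N)
  case 0 then show ?case by simp
next
  case (Suc N)
  then show ?case by (simp del: pow_mat.simps add: pow_mat.simps(2) det_mult[of _ L] det_Gm)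
qed

lemma pc_G:
  assumes L: "L \<ge> 1" and K: "K = 2 * int L - 1" and q: "q < L"
  shows "real (path_count K (Suc (2 * t)) 0 (K - 2 * int q)) = (Gm L ^\<^sub>m t) $$ (q, L - 1)"
  using q
proof (induction t arbitrary: q)
  case 0
  have s1: "1 \<le> K - 2 * int q" "K - 2 * int q \<le> K" using K 0 by auto
  have "real (path_count K (Suc 0) 0 (K - 2 * int q)) = (if K - 2 * int q = 1 then 1 else 0)"
    using s1 by (simp add: pc_Suc pc_0)
  also have "\<dots> = (if q = L - 1 then 1 else 0)" using K 0 L by auto
  also have "\<dots> = (Gm L ^\<^sub>m 0) $$ (q, L - 1)" using 0 L by simp
  finally show ?case by simp
next
  case (Suc t)
  define n where "n = Suc (2 * t)"
  define Ov where "Ov x = (Gm L ^\<^sub>m t) $$ (x, L - 1)" for x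
  define s where "s = K - 2 * int q"
  have IH': "real (path_count K n 0 (K - 2 * int x)) = Ov x" if "x < L" for x
    using Suc.IH[OF that] unfolding n_def Ov_def .
  have qL: "int q \<le> int L - 1" using Suc.prems by linarith
  have rs: "1 \<le> s" "s \<le> K" using K qL unfolding s_def by linarith+
  have a: "real (path_count K n 0 (s - 2)) = (if q + 1 < L then Ov (q + 1) else 0)"
  proof (cases "q + 1 < L")
    case True
    have e: "s - 2 = K - 2 * int (q + 1)" unfolding s_def by simp
    have "real (path_count K n 0 (s - 2)) = Ov (q + 1)" unfolding e by (rule IH'[OF True])
    then show ?thesis by (subst if_P[OF True])
  next
    case False
    then have "q = L - 1" using Suc.prems by simp
    then have "int q = int L - 1" using L by (simp add: of_nat_diff)
    then have "s - 2 < 0" using K unfolding s_def by linarith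
    then have "path_count K n 0 (s - 2) = 0" by (intro pc_out) simp
    then show ?thesis by (subst if_not_P[OF False]) simp
  qed
  have b: "real (path_count K n 0 s) = Ov q" using IH'[OF Suc.prems] unfolding s_def .
  have c: "real (path_count K n 0 (s + 2)) = Ov (q - 1)" if "q \<ge> 1"
  proof -
    have e: "s + 2 = K - 2 * int (q - 1)" using that unfolding s_def by (simp add: of_nat_diff)
    show ?thesis unfolding e by (rule IH') (use Suc.prems in simp)
  qed
  have up: "s + 1 \<le> K \<longleftrightarrow> q \<ge> 1" unfolding s_def by linarith
  have e1: "Suc (2 * Suc t) = Suc (Suc n)" by (simp add: n_def)
  have f1: "real (path_count K (Suc (2 * Suc t)) 0 s)
      = real (path_count K (Suc n) 0 (s - 1)) + real (path_count K (Suc n) 0 (s + 1))"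
    unfolding e1 by (subst pc_Suc) (use rs in simp)
  have f2: "real (path_count K (Suc n) 0 (s - 1)) = real (path_count K n 0 (s - 1 - 1)) + real (path_count K n 0 (s - 1 + 1))"
    by (subst pc_Suc) (use rs in simp)
  have f3: "real (path_count K (Suc n) 0 (s + 1)) = (if s + 1 \<le> K then real (path_count K n 0 (s + 1 - 1)) + real (path_count K n 0 (s + 1 + 1)) else 0)"
    by (subst pc_Suc) (use rs in simp)
  have ar: "s - 1 - 1 = s - 2" "s - 1 + 1 = s" "s + 1 - 1 = s" "s + 1 + 1 = s + 2" by simp_all
  have lhs: "real (path_count K (Suc (2 * Suc t)) 0 s) =
     (if q + 1 < L then Ov (q + 1) else 0) + Ov q + (if q \<ge> 1 then Ov q + Ov (q - 1) else 0)"
  proof (cases "q \<ge> 1")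
    case True
    have t: "s + 1 \<le> K" using up True by simp
    show ?thesis unfolding f1 f2 f3 ar a b if_P[OF t] c[OF True] if_P[OF True] by simp
  next
    case False
    have t: "\<not> s + 1 \<le> K" using up False by simp
    show ?thesis unfolding f1 f2 f3 ar a b if_not_P[OF t] if_not_P[OF False] by simp
  qed
  have "(Gm L ^\<^sub>m Suc t) $$ (q, L - 1) = (Gm L * Gm L ^\<^sub>m t) $$ (q, L - 1)"
    by (simp only: pow_mat_Suc_left[OF Gm_carrier])
  also have "\<dots> = (if q + 1 < L then Ov (q + 1) else 0) + (if q = 0 then 1 else 2) * Ov q + (if q \<ge> 1 then Ov (q - 1) else 0)"
    unfolding Ov_def using G_mult_left[of "Gm L ^\<^sub>m t" L q "L - 1"] Suc.prems L by simp
  finally have "(Gm L ^\<^sub>m Suc t) $$ (q, L - 1) = (if q + 1 < L then Ov (q + 1) else 0) + (if q = 0 then 1 else 2) * Ov q + (if q \<ge> 1 then Ov (q - 1) else 0)" .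
  moreover have "real (path_count K (Suc (2 * Suc t)) 0 (K - 2 * int q)) = (if q + 1 < L then Ov (q + 1) else 0) + (if q = 0 then 1 else 2) * Ov q + (if q \<ge> 1 then Ov (q - 1) else 0)"
    using lhs unfolding s_def by (cases "q = 0") simp_all
  ultimately show ?case by simp
qed

definition chat :: "nat \<Rightarrow> int \<Rightarrow> real" where
  "chat L N = (if even N then 0 else (Gp L ((N - 1) div 2)) $$ (0, L - 1))"

lemma chat_base:
  assumes L: "L \<ge> 1" and K: "K = 2 * int L - 1"
  shows "chat L (int n) = real (path_count K n 0 K)"
proof (cases "even n")
  case True
  have "odd (int n + K)" using True K by auto
  then show ?thesis using True unfolding chat_def by (simp add: pc_parity)
next
  case False
  then obtain t where n: "n = Suc (2 * t)" by (metis oddE Suc_eq_plus1)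
  have "(int n - 1) div 2 = int t" using n by simp
  then have "chat L (int n) = (Gm L ^\<^sub>m t) $$ (0, L - 1)" unfolding chat_def using n by simp
  also have "\<dots> = real (path_count K (Suc (2 * t)) 0 (K - 2 * int 0))" using pc_G[OF L K, of 0 t] L by simp
  finally show ?thesis using n by simp
qed

lemma tri_solve:
  fixes b :: "nat \<Rightarrow> nat \<Rightarrow> real"
  assumes b0: "\<And>j p. j < L \<Longrightarrow> p < L \<Longrightarrow> p + j < L - 1 \<Longrightarrow> b j p = 0"
  and b1: "\<And>j. j < L \<Longrightarrow> b j (L - 1 - j) = 1"
  shows "\<exists>\<beta>. \<forall>p<L. z p = (\<Sum>j<L. \<beta> j * b j p)"
proof -
  have "t \<le> L \<Longrightarrow> \<forall>z. (\<forall>p<L. p < L - t \<longrightarrow> z p = 0) \<longrightarrow> (\<exists>\<beta>. \<forall>p<L. z p = (\<Sum>j<t. \<beta> j * b j p))" for t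
  proof (induction t)
    case 0 then show ?case by auto
  next
    case (Suc t)
    show ?case
    proof (intro allI impI)
      fix z :: "nat \<Rightarrow> real" assume z: "\<forall>p<L. p < L - Suc t \<longrightarrow> z p = 0"
      define a where "a = z (L - 1 - t)"
      define z' where "z' p = z p - a * b t p" for p
      have "\<forall>p<L. p < L - t \<longrightarrow> z' p = 0"
      proof (intro allI impI)
        fix p assume p: "p < L" "p < L - t"
        show "z' p = 0"
        proof (cases "p = L - 1 - t")
          case True then show ?thesis unfolding z'_def a_def using b1[of t] Suc.prems by simp
        next
          case False
          then have "p < L - Suc t" using p by auto
          then show ?thesis unfolding z'_def using z b0[of t p] p Suc.prems by auto
        qed
      qed
      moreover have "t \<le> L" using Suc.prems by simp
      ultimately have "\<exists>\<beta>. \<forall>p<L. z' p = (\<Sum>j<t. \<beta> j * b j p)" using Suc.IH by blast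
      then obtain \<beta> where \<beta>: "\<forall>p<L. z' p = (\<Sum>j<t. \<beta> j * b j p)" by blast
      define \<beta>' where "\<beta>' = \<beta>(t := a)"
      have "\<forall>p<L. z p = (\<Sum>j<Suc t. \<beta>' j * b j p)"
      proof (intro allI impI)
        fix p assume p: "p < L"
        have "(\<Sum>j<Suc t. \<beta>' j * b j p) = (\<Sum>j<t. \<beta> j * b j p) + a * b t p"
        proof -
          have "(\<Sum>j<t. \<beta>' j * b j p) = (\<Sum>j<t. \<beta> j * b j p)"
            by (rule sum.cong) (auto simp: \<beta>'_def)
          then show ?thesis by (simp add: \<beta>'_def)
        qed
        also have "\<dots> = z p"
        proof -
          have "z' p = (\<Sum>j<t. \<beta> j * b j p)" using \<beta> p by blast
          then show ?thesis unfolding z'_def by linarith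
        qed
        finally show "z p = (\<Sum>j<Suc t. \<beta>' j * b j p)" by simp
      qed
      then show "\<exists>\<beta>. \<forall>p<L. z p = (\<Sum>j<Suc t. \<beta> j * b j p)" by blast
    qed
  qed
  from this[of L] show ?thesis by auto
qed

definition uu :: "nat \<Rightarrow> int \<Rightarrow> real" where
  "uu L s = (Gp L s) $$ (0, L - 1)"

lemma beta_ex: assumes L: "L \<ge> 1"
  shows "\<exists>\<beta>. \<forall>p<L. (Gm L ^\<^sub>m L) $$ (p, L - 1) = (\<Sum>j<L. \<beta> j * (Gm L ^\<^sub>m j) $$ (p, L - 1))"
proof (rule tri_solve)
  fix j p assume "j < L" "p < L" "p + j < L - 1"
  then show "(Gm L ^\<^sub>m j) $$ (p, L - 1) = 0" using kry_col[of p L j] by simp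
next
  fix j assume j: "j < L"
  then show "(Gm L ^\<^sub>m j) $$ (L - 1 - j, L - 1) = 1" using kry_col[of "L - 1 - j" L j] by simp
qed

lemma u_rec:
  assumes L: "L \<ge> 1"
  and \<beta>: "\<forall>p<L. (Gm L ^\<^sub>m L) $$ (p, L - 1) = (\<Sum>j<L. \<beta> j * (Gm L ^\<^sub>m j) $$ (p, L - 1))"
  shows "uu L (s + int L) = (\<Sum>j<L. \<beta> j * uu L (s + int j))"
proof -
  have L1: "L - 1 < L" "0 < L" using L by auto
  have "uu L (s + int L) = (Gp L s * Gm L ^\<^sub>m L) $$ (0, L - 1)" unfolding uu_def Gp_add_right ..
  also have "\<dots> = (\<Sum>p<L. (Gp L s) $$ (0,p) * (Gm L ^\<^sub>m L) $$ (p, L - 1))"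
    by (rule mult_entry) (use L1 in auto)
  also have "\<dots> = (\<Sum>p<L. (Gp L s) $$ (0,p) * (\<Sum>j<L. \<beta> j * (Gm L ^\<^sub>m j) $$ (p, L - 1)))"
    by (rule sum.cong) (use \<beta> in auto)
  also have "\<dots> = (\<Sum>p<L. \<Sum>j<L. \<beta> j * ((Gp L s) $$ (0,p) * (Gm L ^\<^sub>m j) $$ (p, L - 1)))"
    by (rule sum.cong[OF refl]) (simp add: sum_distrib_left mult.left_commute)
  also have "\<dots> = (\<Sum>j<L. \<Sum>p<L. \<beta> j * ((Gp L s) $$ (0,p) * (Gm L ^\<^sub>m j) $$ (p, L - 1)))"
    by (rule sum.swap)
  also have "\<dots> = (\<Sum>j<L. \<beta> j * (\<Sum>p<L. (Gp L s) $$ (0,p) * (Gm L ^\<^sub>m j) $$ (p, L - 1)))"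
    by (simp add: sum_distrib_left)
  also have "\<dots> = (\<Sum>j<L. \<beta> j * (Gp L s * Gm L ^\<^sub>m j) $$ (0, L - 1))"
  proof (rule sum.cong)
    fix j assume "j \<in> {..<L}"
    have "(Gp L s * Gm L ^\<^sub>m j) $$ (0, L - 1) = (\<Sum>p<L. (Gp L s) $$ (0,p) * (Gm L ^\<^sub>m j) $$ (p, L - 1))"
      by (rule mult_entry) (use L1 in auto)
    then show "\<beta> j * (\<Sum>p<L. (Gp L s) $$ (0,p) * (Gm L ^\<^sub>m j) $$ (p, L - 1)) = \<beta> j * (Gp L s * Gm L ^\<^sub>m j) $$ (0, L - 1)"
      by simp
  qed simp
  also have "\<dots> = (\<Sum>j<L. \<beta> j * uu L (s + int j))" unfolding uu_def Gp_add_right ..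
  finally show ?thesis .
qed

lemma beta0:
  assumes L: "L \<ge> 1"
  and \<beta>: "\<forall>p<L. (Gm L ^\<^sub>m L) $$ (p, L - 1) = (\<Sum>j<L. \<beta> j * (Gm L ^\<^sub>m j) $$ (p, L - 1))"
  shows "\<beta> 0 \<noteq> 0"
proof
  assume b0: "\<beta> 0 = 0"
  have "uu L (-1 + int L) = (\<Sum>j<L. \<beta> j * uu L (-1 + int j))" by (rule u_rec[OF L \<beta>])
  also have "\<dots> = (\<Sum>j<L. 0)"
  proof (rule sum.cong)
    fix j assume j: "j \<in> {..<L}"
    show "\<beta> j * uu L (-1 + int j) = 0"
    proof (cases j)
      case 0 then show ?thesis using b0 by simp
    next
      case (Suc j')
      have e: "-1 + int j = int j'" using Suc by simp
      have "uu L (-1 + int j) = (Gm L ^\<^sub>m j') $$ (0, L - 1)" unfolding uu_def e Gp_nat ..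
      also have "\<dots> = 0" using kry_row[of "L - 1" L j'] j Suc L by auto
      finally show ?thesis by simp
    qed
  qed simp
  also have "(\<Sum>j<L. (0::real)) = 0" by simp
  finally have z: "uu L (-1 + int L) = 0" .
  have e: "-1 + int L = int (L - 1)" using L by simp
  have "uu L (-1 + int L) = (Gm L ^\<^sub>m (L - 1)) $$ (0, L - 1)" unfolding uu_def e Gp_nat ..
  also have "\<dots> = 1" using kry_row[of "L - 1" L "L - 1"] L by auto
  finally show False using z by simp
qed

lemma even_sum: "(\<Sum>i<2 * (n::nat). if even i then f (i div 2) else (0::real)) = (\<Sum>j<n. f j)"
  by (induction n) auto

lemma chat_rec:
  assumes L: "L \<ge> 1"
  and \<beta>: "\<forall>p<L. (Gm L ^\<^sub>m L) $$ (p, L - 1) = (\<Sum>j<L. \<beta> j * (Gm L ^\<^sub>m j) $$ (p, L - 1))"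
  shows "chat L (N + int (2 * L)) = (\<Sum>i<2 * L. (if even i then \<beta> (i div 2) else 0) * chat L (N + int i))"
proof -
  define s where "s = (N - 1) div 2"
  have pt: "(if even i then \<beta> (i div 2) else 0) * chat L (N + int i)
     = (if even i then (if even N then 0 else \<beta> (i div 2) * uu L (s + int (i div 2))) else 0)" for i
  proof (cases "even i")
    case True
    then obtain h where i: "i = 2 * h" by blast
    have "(N + int i - 1) div 2 = s + int h" unfolding s_def i by (simp add: algebra_simps)
    then show ?thesis using i unfolding chat_def uu_def by simp
  qed simp
  have "(\<Sum>i<2 * L. (if even i then \<beta> (i div 2) else 0) * chat L (N + int i))
      = (\<Sum>j<L. (if even N then 0 else \<beta> j * uu L (s + int j)))"
    unfolding pt by (rule even_sum)
  also have "\<dots> = (if even N then 0 else uu L (s + int L))"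
    using u_rec[OF L \<beta>, of s] by simp
  also have "\<dots> = chat L (N + int (2 * L))"
  proof -
    have "(N + int (2 * L) - 1) div 2 = s + int L" unfolding s_def by (simp add: algebra_simps)
    then show ?thesis unfolding chat_def uu_def by simp
  qed
  finally show ?thesis by simp
qed

lemma C_chat:
  assumes L: "L \<ge> 1" and K: "K = 2 * int L - 1"
  shows "C K N 0 K = chat L N"
proof -
  obtain \<beta> where \<beta>: "\<forall>p<L. (Gm L ^\<^sub>m L) $$ (p, L - 1) = (\<Sum>j<L. \<beta> j * (Gm L ^\<^sub>m j) $$ (p, L - 1))"
    using beta_ex[OF L] by blast
  show ?thesis
  proof (rule C_eq_ext[where d = "2 * L" and g = "\<lambda>i. if even i then \<beta> (i div 2) else 0"])
    show "0 < 2 * L" using L by simp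
    show "(if even 0 then \<beta> (0 div 2) else 0) \<noteq> 0" using beta0[OF L \<beta>] by simp
    show "chat L (N' + int (2 * L)) = (\<Sum>j<2 * L. (if even j then \<beta> (j div 2) else 0) * chat L (N' + int j))" for N'
      by (rule chat_rec[OF L \<beta>])
    show "chat L (int n) = real (path_count K n 0 K)" for n by (rule chat_base[OF L K])
  qed
qed

lemma D_uu:
  fixes k m :: nat
  assumes "k + m \<ge> 1"
  shows "D (2 * int k + 2 * int m - 1) t = uu (k + m) (t + int (k + m) - 1)"
proof -
  define L where "L = k + m"
  have L: "L \<ge> 1" using assms L_def by simp
  have K: "2 * int k + 2 * int m - 1 = 2 * int L - 1" unfolding L_def by simp
  have "D (2 * int k + 2 * int m - 1) t = C (2 * int L - 1) (2 * t + (2 * int L - 1)) 0 (2 * int L - 1)"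
    unfolding D_def K ..
  also have "\<dots> = chat L (2 * t + (2 * int L - 1))" by (rule C_chat[OF L]) simp
  also have "\<dots> = uu L (t + int L - 1)"
  proof -
    have "odd (2 * t + (2 * int L - 1))" by simp
    moreover have "(2 * t + (2 * int L - 1) - 1) div 2 = t + int L - 1" by simp
    ultimately show ?thesis unfolding chat_def uu_def by simp
  qed
  finally show ?thesis unfolding L_def .
qed

lemma det_lower_unit: assumes A: "A \<in> carrier_mat n n"
  and l: "\<And>i j. i < j \<Longrightarrow> j < n \<Longrightarrow> A $$ (i,j) = 0" and d: "\<And>i. i < n \<Longrightarrow> A $$ (i,i) = 1"
  shows "det A = 1"
proof -
  have "det A = prod_list (diag_mat A)" by (rule det_lower_triangular[OF l A])
  also have "\<dots> = (\<Prod>i = 0..<n. A $$ (i,i))" using A by (simp add: prod_list_diag_prod)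
  also have "\<dots> = 1" by (rule prod.neutral) (auto simp: d)
  finally show ?thesis .
qed

lemma det_upper_unit: assumes A: "A \<in> carrier_mat n n"
  and l: "\<And>i j. j < i \<Longrightarrow> i < n \<Longrightarrow> A $$ (i,j) = 0" and d: "\<And>i. i < n \<Longrightarrow> A $$ (i,i) = 1"
  shows "det A = 1"
proof -
  have ut: "upper_triangular A" unfolding upper_triangular_def using A l by auto
  have "det A = prod_list (diag_mat A)" by (rule det_upper_triangular[OF ut A])
  also have "\<dots> = (\<Prod>i = 0..<n. A $$ (i,i))" using A by (simp add: prod_list_diag_prod)
  also have "\<dots> = 1" by (rule prod.neutral) (auto simp: d)
  finally show ?thesis .
qed

lemma sum_tail: assumes b: "b \<le> (L::nat)" and z: "\<And>r. r < L - b \<Longrightarrow> f r = 0"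
  shows "(\<Sum>r<L. f r) = (\<Sum>q<b. f (L - b + q))"
proof -
  have "(\<Sum>r<L. f r) = (\<Sum>r\<in>{L - b..<L}. f r)"
    by (rule sum.mono_neutral_right) (auto simp: z)
  also have "\<dots> = (\<Sum>q<b. f (L - b + q))"
    by (rule sum.reindex_bij_witness[of _ "\<lambda>q. L - b + q" "\<lambda>r. r - (L - b)"]) (use b in auto)
  finally show ?thesis .
qed

lemma sum_head: assumes b: "b \<le> (L::nat)" and z: "\<And>r. b \<le> r \<Longrightarrow> r < L \<Longrightarrow> f r = 0"
  shows "(\<Sum>r<L. f r) = (\<Sum>q<b. f q)"
  by (rule sum.mono_neutral_right) (use b z in auto)

lemma fac:
  assumes X: "X \<in> carrier_mat L L" and b: "b \<le> L"
  shows "det (mat b b (\<lambda>(i,j). (Gm L ^\<^sub>m i * X * Gm L ^\<^sub>m (b - 1 - j)) $$ (0, L - 1)))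
       = det (mat b b (\<lambda>(p,q). X $$ (p, L - b + q)))"
proof (cases "b = 0")
  case True then show ?thesis by simp
next
  case False
  then have L0: "0 < L" "L - 1 < L" using b by auto
  define A where "A = mat b b (\<lambda>(i,p). (Gm L ^\<^sub>m i) $$ (0, p))"
  define Xb where "Xb = mat b b (\<lambda>(p,q). X $$ (p, L - b + q))"
  define B where "B = mat b b (\<lambda>(q,j). (Gm L ^\<^sub>m (b - 1 - j)) $$ (L - b + q, L - 1))"
  have cA: "A \<in> carrier_mat b b" and cX: "Xb \<in> carrier_mat b b" and cB: "B \<in> carrier_mat b b"
    unfolding A_def Xb_def B_def by auto
  have eq: "mat b b (\<lambda>(i,j). (Gm L ^\<^sub>m i * X * Gm L ^\<^sub>m (b - 1 - j)) $$ (0, L - 1)) = A * Xb * B"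
  proof (rule eq_matI)
    fix i j assume "i < dim_row (A * Xb * B)" "j < dim_col (A * Xb * B)"
    then have i: "i < b" and j: "j < b" using cA cB by auto
    define c where "c = b - 1 - j"
    have "(Gm L ^\<^sub>m i * X * Gm L ^\<^sub>m c) $$ (0, L - 1) = (\<Sum>r<L. (Gm L ^\<^sub>m i * X) $$ (0, r) * (Gm L ^\<^sub>m c) $$ (r, L - 1))"
      by (rule mult_entry[of _ L L]) (use X L0 in auto)
    also have "\<dots> = (\<Sum>r<L. (\<Sum>p<L. (Gm L ^\<^sub>m i) $$ (0,p) * X $$ (p,r)) * (Gm L ^\<^sub>m c) $$ (r, L - 1))"
      by (rule sum.cong[OF refl], subst mult_entry[of _ L L _ L]) (use X L0 in auto)
    also have "\<dots> = (\<Sum>q<b. (\<Sum>p<L. (Gm L ^\<^sub>m i) $$ (0,p) * X $$ (p,L - b + q)) * (Gm L ^\<^sub>m c) $$ (L - b + q, L - 1))"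
    proof (rule sum_tail[OF b])
      fix r assume r: "r < L - b"
      then have "r + c < L - 1" unfolding c_def using j b by linarith
      then have "(Gm L ^\<^sub>m c) $$ (r, L - 1) = 0" using kry_col[of r L c] r b by auto
      then show "(\<Sum>p<L. (Gm L ^\<^sub>m i) $$ (0,p) * X $$ (p,r)) * (Gm L ^\<^sub>m c) $$ (r, L - 1) = 0" by simp
    qed
    also have "\<dots> = (\<Sum>q<b. (\<Sum>p<b. (Gm L ^\<^sub>m i) $$ (0,p) * X $$ (p,L - b + q)) * (Gm L ^\<^sub>m c) $$ (L - b + q, L - 1))"
    proof (rule sum.cong[OF refl])
      fix q assume q: "q \<in> {..<b}"
      have "(\<Sum>p<L. (Gm L ^\<^sub>m i) $$ (0,p) * X $$ (p,L - b + q)) = (\<Sum>p<b. (Gm L ^\<^sub>m i) $$ (0,p) * X $$ (p,L - b + q))"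
      proof (rule sum_head[OF b])
        fix r assume r: "b \<le> r" "r < L"
        then have "(Gm L ^\<^sub>m i) $$ (0,r) = 0" using kry_row[of r L i] i by auto
        then show "(Gm L ^\<^sub>m i) $$ (0,r) * X $$ (r,L - b + q) = 0" by simp
      qed
      then show "(\<Sum>p<L. (Gm L ^\<^sub>m i) $$ (0,p) * X $$ (p,L - b + q)) * (Gm L ^\<^sub>m c) $$ (L - b + q, L - 1)
          = (\<Sum>p<b. (Gm L ^\<^sub>m i) $$ (0,p) * X $$ (p,L - b + q)) * (Gm L ^\<^sub>m c) $$ (L - b + q, L - 1)" by simp
    qed
    also have "\<dots> = (A * Xb * B) $$ (i,j)"
    proof -
      have "(A * Xb * B) $$ (i,j) = (\<Sum>q<b. (A * Xb) $$ (i,q) * B $$ (q,j))"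
        by (rule mult_entry[of _ b b]) (use cA cX cB i j in auto)
      also have "\<dots> = (\<Sum>q<b. (\<Sum>p<b. A $$ (i,p) * Xb $$ (p,q)) * B $$ (q,j))"
        by (rule sum.cong[OF refl], subst mult_entry[of _ b b _ b]) (use cA cX i in auto)
      also have "\<dots> = (\<Sum>q<b. (\<Sum>p<b. (Gm L ^\<^sub>m i) $$ (0,p) * X $$ (p,L - b + q)) * (Gm L ^\<^sub>m c) $$ (L - b + q, L - 1))"
        unfolding A_def Xb_def B_def c_def using i j by (intro sum.cong refl) auto
      finally show ?thesis by simp
    qed
    finally show "mat b b (\<lambda>(i,j). (Gm L ^\<^sub>m i * X * Gm L ^\<^sub>m (b - 1 - j)) $$ (0, L - 1)) $$ (i,j) = (A * Xb * B) $$ (i,j)"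
      using i j unfolding c_def by simp
  next
    show "dim_row (mat b b (\<lambda>(i,j). (Gm L ^\<^sub>m i * X * Gm L ^\<^sub>m (b - 1 - j)) $$ (0, L - 1))) = dim_row (A * Xb * B)"
      using cA by simp
    show "dim_col (mat b b (\<lambda>(i,j). (Gm L ^\<^sub>m i * X * Gm L ^\<^sub>m (b - 1 - j)) $$ (0, L - 1))) = dim_col (A * Xb * B)"
      using cB by simp
  qed
  have dA: "det A = 1"
  proof (rule det_lower_unit[OF cA])
    fix i j assume "i < j" "j < b"
    then show "A $$ (i,j) = 0" unfolding A_def using kry_row[of j L i] b by auto
  next
    fix i assume "i < b" then show "A $$ (i,i) = 1" unfolding A_def using kry_row[of i L i] b by auto
  qed
  have dB: "det B = 1"
  proof (rule det_lower_unit[OF cB])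
    fix q j assume qj: "q < j" "j < b"
    then have "L - b + q + (b - 1 - j) < L - 1" "L - b + q < L" using b by linarith+
    then show "B $$ (q,j) = 0" unfolding B_def using kry_col[of "L - b + q" L "b - 1 - j"] qj by auto
  next
    fix q assume q: "q < b"
    then have "L - b + q + (b - 1 - q) = L - 1" "L - b + q < L" using b by linarith+
    then show "B $$ (q,q) = 1" unfolding B_def using kry_col[of "L - b + q" L "b - 1 - q"] q by auto
  qed
  have cAX: "A * Xb \<in> carrier_mat b b" using cA cX by simp
  have "det (A * Xb * B) = det (A * Xb) * det B" by (rule det_mult[OF cAX cB])
  also have "det (A * Xb) = det A * det Xb" by (rule det_mult[OF cA cX])
  finally have "det (A * Xb * B) = det A * det Xb * det B" .
  then show ?thesis unfolding eq dA dB Xb_def by simp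
qed

lemma jacobi:
  fixes H Y :: "real mat"
  assumes H: "H \<in> carrier_mat (k + m) (k + m)" and Y: "Y \<in> carrier_mat (k + m) (k + m)"
  and HY: "H * Y = 1\<^sub>m (k + m)" and dH: "det H = 1"
  shows "det (mat k k (\<lambda>(i,j). H $$ (i, m + j))) = (-1) ^ (k * m) * det (mat m m (\<lambda>(i,j). Y $$ (i, k + j)))"
proof -
  define n where "n = k + m"
  define Yb where "Yb = mat m m (\<lambda>(i,j). Y $$ (i, k + j))"
  define Hb where "Hb = mat k k (\<lambda>(i,j). H $$ (i, m + j))"
  define Z where "Z = mat n n (\<lambda>(r,c). if c < m then Y $$ (r, k + c) else (if r = c then 1 else 0))"
  have cZ: "Z \<in> carrier_mat n n" unfolding Z_def by simp
  have Hn: "H \<in> carrier_mat n n" using H unfolding n_def .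
  have dZ: "det Z = det Yb"
  proof -
    define Zc where "Zc = mat k m (\<lambda>(r,c). Y $$ (m + r, k + c))"
    have "Z = four_block_mat Yb (0\<^sub>m m k) Zc (1\<^sub>m k)"
      unfolding Z_def Yb_def Zc_def n_def by (rule eq_matI) auto
    also have "det \<dots> = det Yb * det (1\<^sub>m k)"
      by (rule det_four_block_mat_upper_right_zero) (auto simp: Yb_def Zc_def)
    finally show ?thesis by simp
  qed
  have HZ: "H * Z = mat n n (\<lambda>(r,c). if c < m then (if r = k + c then 1 else 0) else H $$ (r,c))"
  proof (rule eq_matI)
    fix r c assume rc: "r < dim_row (mat n n (\<lambda>(r,c). if c < m then (if r = k + c then 1 else 0) else H $$ (r,c)))"
      "c < dim_col (mat n n (\<lambda>(r,c). if c < m then (if r = k + c then 1 else 0) else H $$ (r,c)))"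
    then have r: "r < n" and c: "c < n" by auto
    have e: "(H * Z) $$ (r,c) = (\<Sum>p<n. H $$ (r,p) * Z $$ (p,c))"
      by (rule mult_entry[OF Hn cZ r c])
    show "(H * Z) $$ (r,c) = mat n n (\<lambda>(r,c). if c < m then (if r = k + c then 1 else 0) else H $$ (r,c)) $$ (r,c)"
    proof (cases "c < m")
      case True
      have "(\<Sum>p<n. H $$ (r,p) * Z $$ (p,c)) = (\<Sum>p<n. H $$ (r,p) * Y $$ (p, k + c))"
        by (rule sum.cong) (use True c in \<open>auto simp: Z_def\<close>)
      also have "\<dots> = (H * Y) $$ (r, k + c)"
        by (rule mult_entry[symmetric]) (use H Y r c True in \<open>auto simp: n_def\<close>)
      also have "\<dots> = (if r = k + c then 1 else 0)" using HY r c True by (simp add: n_def)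
      finally show ?thesis using e True r c by simp
    next
      case False
      have "(\<Sum>p<n. H $$ (r,p) * Z $$ (p,c)) = (\<Sum>p<n. if p = c then H $$ (r,p) else 0)"
        by (rule sum.cong) (use False c in \<open>auto simp: Z_def\<close>)
      also have "\<dots> = H $$ (r,c)" using c by (simp add: sum.delta)
      finally show ?thesis using e False r c by simp
    qed
  qed (use carrier_matD[OF Hn] carrier_matD[OF cZ] in simp_all)
  have dHZ: "det (H * Z) = det Yb" using det_mult[OF Hn cZ] dH dZ by simp
  have cHZ: "H * Z \<in> carrier_mat (k + m) (k + m)" using Hn cZ unfolding n_def by simp
  have "det (H * Z) = (-1) ^ (k * m) * det (mat (k + m) (k + m) (\<lambda>(i,j). (H * Z) $$ (i, if j < k then j + m else j - k)))"
    by (rule det_swap_cols[OF cHZ])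
  also have "mat (k + m) (k + m) (\<lambda>(i,j). (H * Z) $$ (i, if j < k then j + m else j - k))
      = four_block_mat Hb (0\<^sub>m k m) (mat m k (\<lambda>(r,c). H $$ (k + r, m + c))) (1\<^sub>m m)"
    unfolding HZ Hb_def n_def by (rule eq_matI) (auto simp: add.commute)
  also have "det \<dots> = det Hb * det (1\<^sub>m m)"
    by (rule det_four_block_mat_upper_right_zero) (auto simp: Hb_def)
  finally have "det Yb = (-1) ^ (k * m) * det Hb" using dHZ by simp
  then have "(-1) ^ (k * m) * det Yb = ((-1) ^ (k * m) * (-1) ^ (k * m)) * det Hb" by simp
  also have "(-1::real) ^ (k * m) * (-1) ^ (k * m) = 1" by (simp add: power_mult_distrib[symmetric] flip: power_add mult_2)
  finally show ?thesis unfolding Hb_def Yb_def by simp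
qed

theorem theorem18:
  fixes n k m :: nat
  assumes "0 < k" and "0 < m"
  shows "det (mat k k (\<lambda>(i, j). D (2 * int k + 2 * int m - 1) (int n + int j - int i)))
       = (-1) ^ (k * m) *
         det (mat m m (\<lambda>(i, j). D (2 * int k + 2 * int m - 1)
                                  (- int n - int j + int i - int k - int m)))"
proof -
  define L where "L = k + m"
  define N where "N = n + m"
  define K' where "K' = 2 * int k + 2 * int m - 1"
  have L1: "k + m \<ge> 1" using assms by simp
  have Dd: "D K' t = uu L (t + int L - 1)" for t unfolding K'_def L_def by (rule D_uu[OF L1])
  define H where "H = Gm L ^\<^sub>m N"
  define Y where "Y = Wm L ^\<^sub>m N"
  have cH: "H \<in> carrier_mat L L" unfolding H_def by simp
  have cY: "Y \<in> carrier_mat L L" unfolding Y_def by simp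
  define M1 where "M1 = mat k k (\<lambda>(i, j). D K' (int n + int j - int i))"
  have "det M1 = det (transpose_mat M1)" by (rule det_transpose[symmetric, of _ k]) (simp add: M1_def)
  also have "transpose_mat M1 = mat k k (\<lambda>(i,j). (Gm L ^\<^sub>m i * H * Gm L ^\<^sub>m (k - 1 - j)) $$ (0, L - 1))"
  proof (rule eq_matI)
    fix i j assume ij: "i < dim_row (mat k k (\<lambda>(i,j). (Gm L ^\<^sub>m i * H * Gm L ^\<^sub>m (k - 1 - j)) $$ (0, L - 1)))"
       "j < dim_col (mat k k (\<lambda>(i,j). (Gm L ^\<^sub>m i * H * Gm L ^\<^sub>m (k - 1 - j)) $$ (0, L - 1)))"
    then have i: "i < k" and j: "j < k" by auto
    have e: "int n + int i - int j + int L - 1 = int (i + N + (k - 1 - j))"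
      using j unfolding L_def N_def by (simp add: of_nat_diff)
    have "transpose_mat M1 $$ (i,j) = D K' (int n + int i - int j)" using i j unfolding M1_def by simp
    also have "\<dots> = (Gm L ^\<^sub>m (i + N + (k - 1 - j))) $$ (0, L - 1)" unfolding Dd uu_def e Gp_nat ..
    also have "Gm L ^\<^sub>m (i + N + (k - 1 - j)) = Gm L ^\<^sub>m i * H * Gm L ^\<^sub>m (k - 1 - j)"
      unfolding H_def by (simp only: pow_mat_add[OF Gm_carrier])
    finally show "transpose_mat M1 $$ (i,j) = mat k k (\<lambda>(i,j). (Gm L ^\<^sub>m i * H * Gm L ^\<^sub>m (k - 1 - j)) $$ (0, L - 1)) $$ (i,j)"
      using i j by simp
  qed (auto simp: M1_def)
  also have "det \<dots> = det (mat k k (\<lambda>(p,q). H $$ (p, L - k + q)))"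
    by (rule fac[OF cH]) (simp add: L_def)
  also have "L - k = m" unfolding L_def by simp
  finally have lhs: "det M1 = det (mat k k (\<lambda>(p,q). H $$ (p, m + q)))" .
  define M2 where "M2 = mat m m (\<lambda>(i, j). D K' (- int n - int j + int i - int k - int m))"
  have "M2 = mat m m (\<lambda>(i,j). (Gm L ^\<^sub>m i * Y * Gm L ^\<^sub>m (m - 1 - j)) $$ (0, L - 1))"
  proof (rule eq_matI)
    fix i j assume ij: "i < dim_row (mat m m (\<lambda>(i,j). (Gm L ^\<^sub>m i * Y * Gm L ^\<^sub>m (m - 1 - j)) $$ (0, L - 1)))"
       "j < dim_col (mat m m (\<lambda>(i,j). (Gm L ^\<^sub>m i * Y * Gm L ^\<^sub>m (m - 1 - j)) $$ (0, L - 1)))"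
    then have i: "i < m" and j: "j < m" by auto
    have e: "- int n - int j + int i - int k - int m + int L - 1 = (- int N + int (m - 1 - j)) + int i"
      using j unfolding L_def N_def by (simp add: of_nat_diff)
    have "M2 $$ (i,j) = D K' (- int n - int j + int i - int k - int m)" using i j unfolding M2_def by simp
    also have "\<dots> = (Gp L ((- int N + int (m - 1 - j)) + int i)) $$ (0, L - 1)" unfolding Dd uu_def e ..
    also have "Gp L ((- int N + int (m - 1 - j)) + int i) = Gm L ^\<^sub>m i * (Y * Gm L ^\<^sub>m (m - 1 - j))"
    proof -
      have "Gp L ((- int N + int (m - 1 - j)) + int i) = Gm L ^\<^sub>m i * Gp L (- int N + int (m - 1 - j))"
        by (rule Gp_add_left)
      moreover have "Gp L (- int N + int (m - 1 - j)) = Gp L (- int N) * Gm L ^\<^sub>m (m - 1 - j)"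
        by (rule Gp_add_right)
      ultimately show ?thesis unfolding Gp_neg Y_def by simp
    qed
    also have "\<dots> = Gm L ^\<^sub>m i * Y * Gm L ^\<^sub>m (m - 1 - j)"
      by (rule assoc_mult_mat[symmetric, of _ L L _ L _ L]) (use cY in auto)
    finally show "M2 $$ (i,j) = mat m m (\<lambda>(i,j). (Gm L ^\<^sub>m i * Y * Gm L ^\<^sub>m (m - 1 - j)) $$ (0, L - 1)) $$ (i,j)"
      using i j by simp
  qed (auto simp: M2_def)
  then have "det M2 = det (mat m m (\<lambda>(p,q). Y $$ (p, L - m + q)))"
    using fac[OF cY, of m] by (simp add: L_def)
  also have "L - m = k" unfolding L_def by simp
  finally have rhs: "det M2 = det (mat m m (\<lambda>(p,q). Y $$ (p, k + q)))" .
  have jac: "det (mat k k (\<lambda>(p,q). H $$ (p, m + q))) = (-1) ^ (k * m) * det (mat m m (\<lambda>(p,q). Y $$ (p, k + q)))"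
  proof (rule jacobi)
    show "H \<in> carrier_mat (k + m) (k + m)" using cH unfolding L_def .
    show "Y \<in> carrier_mat (k + m) (k + m)" using cY unfolding L_def .
    show "H * Y = 1\<^sub>m (k + m)" unfolding H_def Y_def L_def by (rule GW_one)
    show "det H = 1" unfolding H_def by (rule det_Gpow)
  qed
  show ?thesis using lhs rhs jac unfolding M1_def M2_def K'_def by simp
qed

end
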